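(* Let $t_0\ge 0$ and let $\beta(t)$, $\gamma(t)$ be continuous real-valued functions on $[t_0,\infty)$. Let $\alpha:[t_0,\infty)\times[0,\infty)\to[0,\infty)$ be continuous with respect to $t$ on $[t_0,\infty)$, locally Lipschitz-continuous and nondecreasing with respect to $y$. Suppose there exists a function $\mu\in C^1[t_0,\infty)$ with $\mu(t)>0$ such that $$\alpha\Big(t,\frac{1}{\mu(t)}\Big)+\beta(t)\le \frac{1}{\mu(t)}\Big[\gamma(t)-\frac{\dot\mu(t)}{\mu(t)}\Big],\qquad t\ge t_0.$$ Let $g(t)\ge 0$ be a (differentiable) solution to the inequality $$\dot g(t)\le -\gamma(t)g(t)+\alpha(t,g(t))+\beta(t),\qquad t\ge t_0,$$ such that $\mu(t_0)g(t_0)<1$. Then $g(t)$ exists globally (i.e., is defined for all $t\ge t_0$) and $$0\le g(t)<\frac{1}{\mu(t)},\qquad \forall t\ge t_0.$$ Consequently, if $\lim_{t\to\infty}\mu(t)=\infty$, then $\lim_{t\to\infty}g(t)=0$.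
   Context: $\dot g = dg/dt$. *)

theory Defs
  imports "HOL-Analysis.Analysis"
begin

end

theory Submission
  imports Defs
begin

theorem theorem1:
  fixes t0 :: real
    and \<alpha> :: "real \<Rightarrow> real \<Rightarrow> real"
    and \<beta> \<gamma> \<mu> \<mu>' g g' :: "real \<Rightarrow> real"
  assumes t0: "t0 \<ge> 0"
    and \<beta>_cont: "continuous_on {t0..} \<beta>"
    and \<gamma>_cont: "continuous_on {t0..} \<gamma>"
    and \<alpha>_nonneg: "\<And>t y. t \<ge> t0 \<Longrightarrow> y \<ge> 0 \<Longrightarrow> \<alpha> t y \<ge> 0"
    and \<alpha>_cont_t: "\<And>y. y \<ge> 0 \<Longrightarrow> continuous_on {t0..} (\<lambda>t. \<alpha> t y)"
    and \<alpha>_lip: "local_lipschitz {t0..} {0..} \<alpha>"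
    and \<alpha>_mono: "\<And>t. t \<ge> t0 \<Longrightarrow> mono_on {0..} (\<alpha> t)"
    and \<mu>_deriv: "\<And>t. t \<ge> t0 \<Longrightarrow> (\<mu> has_real_derivative \<mu>' t) (at t within {t0..})"
    and \<mu>'_cont: "continuous_on {t0..} \<mu>'"
    and \<mu>_pos: "\<And>t. t \<ge> t0 \<Longrightarrow> \<mu> t > 0"
    and \<mu>_ineq: "\<And>t. t \<ge> t0 \<Longrightarrow>
        \<alpha> t (1 / \<mu> t) + \<beta> t \<le> (1 / \<mu> t) * (\<gamma> t - \<mu>' t / \<mu> t)"
    and g_deriv: "\<And>t. t \<ge> t0 \<Longrightarrow> (g has_real_derivative g' t) (at t within {t0..})"
    and g_nonneg: "\<And>t. t \<ge> t0 \<Longrightarrow> g t \<ge> 0"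
    and g_ineq: "\<And>t. t \<ge> t0 \<Longrightarrow> g' t \<le> - \<gamma> t * g t + \<alpha> t (g t) + \<beta> t"
    and init: "\<mu> t0 * g t0 < 1"
  shows "(\<forall>t\<ge>t0. 0 \<le> g t \<and> g t < 1 / \<mu> t) \<and>
         (filterlim \<mu> at_top at_top \<longrightarrow> (g \<longlongrightarrow> 0) at_top)"
proof -
  define h where "h = (\<lambda>t. 1 / \<mu> t)"
  have gcont: "continuous_on {t0..} g" by (rule DERIV_continuous_on[OF g_deriv]) auto
  have mucont: "continuous_on {t0..} \<mu>" by (rule DERIV_continuous_on[OF \<mu>_deriv]) auto
  have h_deriv: "(h has_real_derivative (- \<mu>' t / (\<mu> t)^2)) (at t within {t0..})" if "t \<ge> t0" for t
    unfolding h_def using \<mu>_deriv[OF that] \<mu>_pos[OF that]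
    by (auto intro!: derivative_eq_intros simp: power2_eq_square)
  have main: "g t < h t" if "t \<ge> t0" for t
  proof (rule ccontr)
    assume "\<not> g t < h t"
    define S where "S = {t0..t} \<inter> (\<lambda>s. g s - h s) -` {0..}"
    have wcont: "continuous_on {t0..t} (\<lambda>s. g s - h s)"
      unfolding h_def using gcont mucont \<mu>_pos
      by (auto intro!: continuous_intros elim: continuous_on_subset simp: less_imp_neq[symmetric])
    have "closed S" unfolding S_def by (rule continuous_closed_preimage[OF wcont]) auto
    moreover have "t \<in> S" using that \<open>\<not> g t < h t\<close> by (auto simp: S_def)
    moreover have "bdd_below S" by (auto simp: S_def bdd_below_def)
    ultimately have TS: "Inf S \<in> S" using closed_contains_Inf by blast
    define T where "T = Inf S"
    have Tin: "t0 \<le> T" "g T \<ge> h T" using TS by (auto simp: S_def T_def)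
    have below: "g s < h s" if "t0 \<le> s" "s < T" for s
    proof (rule ccontr)
      assume "\<not> g s < h s"
      then have "s \<in> S" using that TS by (auto simp: S_def T_def)
      then have "T \<le> s" unfolding T_def using \<open>bdd_below S\<close> by (rule cInf_lower)
      then show False using that by simp
    qed
    have "g t0 < h t0" using init \<mu>_pos[of t0] by (simp add: h_def field_simps)
    then have "T \<noteq> t0" using Tin by auto
    then have tT: "t0 < T" using Tin by simp
    have gcT: "continuous_on {t0..T} \<gamma>" using \<gamma>_cont by (rule continuous_on_subset) auto
    define \<Gamma> where "\<Gamma> = (\<lambda>s. integral {t0..s} \<gamma>)"
    define \<phi> where "\<phi> = (\<lambda>s. (g s - h s) * exp (\<Gamma> s))"
    have \<phi>_deriv: "(\<phi> has_real_derivative ((g' s + \<mu>' s / (\<mu> s)^2) * exp (\<Gamma> s) + (g s - h s) * (exp (\<Gamma> s) * \<gamma> s))) (at s within {t0..T})"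
      if "s \<in> {t0..T}" for s
    proof -
      have "(\<Gamma> has_real_derivative \<gamma> s) (at s within {t0..T})"
        unfolding \<Gamma>_def by (rule integral_has_real_derivative[OF gcT that])
      moreover have "(g has_real_derivative g' s) (at s within {t0..T})"
        using g_deriv[of s] that by (auto intro: DERIV_subset)
      moreover have "(h has_real_derivative (- \<mu>' s / (\<mu> s)^2)) (at s within {t0..T})"
        using h_deriv[of s] that by (auto intro: DERIV_subset)
      ultimately show ?thesis unfolding \<phi>_def
        by (auto intro!: derivative_eq_intros)
    qed
    have "\<phi> T \<le> \<phi> t0"
    proof (rule DERIV_nonpos_imp_decreasing_open[OF less_imp_le[OF tT]])
      show "continuous_on {t0..T} \<phi>" by (rule DERIV_continuous_on[OF \<phi>_deriv])
      fix s assume s: "t0 < s" "s < T"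
      have st: "s \<ge> t0" using s by simp
      have lt: "g s < h s" using below[of s] s by simp
      have hpos: "h s > 0" using \<mu>_pos[OF st] by (simp add: h_def)
      have "\<alpha> s (g s) \<le> \<alpha> s (h s)"
        using \<alpha>_mono[OF st] g_nonneg[OF st] lt hpos by (auto simp: mono_on_def)
      moreover have "\<alpha> s (h s) + \<beta> s \<le> h s * \<gamma> s - \<mu>' s / (\<mu> s)^2"
        using \<mu>_ineq[OF st] by (simp add: h_def power2_eq_square algebra_simps)
      moreover note g_ineq[OF st]
      ultimately have "g' s + \<mu>' s / (\<mu> s)^2 + (g s - h s) * \<gamma> s \<le> 0"
        by (simp add: algebra_simps)
      then have "((g' s + \<mu>' s / (\<mu> s)^2) * exp (\<Gamma> s) + (g s - h s) * (exp (\<Gamma> s) * \<gamma> s)) \<le> 0"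
        by (metis (no_types, lifting) distrib_right exp_gt_zero mult.commute mult.left_commute
            mult_nonpos_nonneg less_imp_le)
      moreover have "(\<phi> has_real_derivative ((g' s + \<mu>' s / (\<mu> s)^2) * exp (\<Gamma> s) + (g s - h s) * (exp (\<Gamma> s) * \<gamma> s))) (at s)"
        using \<phi>_deriv[of s] s by (simp add: at_within_Icc_at)
      ultimately show "\<exists>y. (\<phi> has_real_derivative y) (at s) \<and> y \<le> 0" by blast
    qed
    moreover have "\<phi> T \<ge> 0" using Tin by (simp add: \<phi>_def)
    moreover have "\<phi> t0 < 0" using \<open>g t0 < h t0\<close> by (simp add: \<phi>_def mult_neg_pos)
    ultimately show False by simp
  qed
  have part1: "\<forall>t\<ge>t0. 0 \<le> g t \<and> g t < 1 / \<mu> t" using main g_nonneg by (simp add: h_def)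
  have part2: "(g \<longlongrightarrow> 0) at_top" if lim: "filterlim \<mu> at_top at_top"
  proof (rule tendsto_sandwich[of "\<lambda>_. 0" g at_top "\<lambda>t. inverse (\<mu> t)"])
    show "\<forall>\<^sub>F n in at_top. 0 \<le> g n" using eventually_ge_at_top[of t0] by eventually_elim (simp add: g_nonneg)
    show "\<forall>\<^sub>F n in at_top. g n \<le> inverse (\<mu> n)" using eventually_ge_at_top[of t0]
      by eventually_elim (use part1 in \<open>auto simp: divide_inverse less_imp_le\<close>)
    show "((\<lambda>_. 0) \<longlongrightarrow> (0::real)) at_top" by simp
    show "((\<lambda>t. inverse (\<mu> t)) \<longlongrightarrow> 0) at_top" by (rule tendsto_inverse_0_at_top[OF lim])
  qed
  show ?thesis using part1 part2 by blast
qed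

end
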